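(* Let $a,a',c,c'\in\mathbb{C}$ with $c,c'$ not non-positive integers, and $x,y\in\mathbb{C}$. Then $${}_1F_1\!\left({a\atop c};x\right){}_1F_1\!\left({a'\atop c'};y\right)=\sum_{j=0}^\infty D_j\,(x+y)^j\,{}_2F_1\!\left({-j,\ c+c'+j-1\atop c};\frac{x}{x+y}\right){}_1F_1\!\left({a+a'+j\atop c+c'+2j};x+y\right),$$ where $$D_j=\frac{(c)_j(a+a')_j}{j!\,(c')_j(c+c'+j-1)_j}\,{}_3F_2\!\left({-j,\ a,\ c+c'+j-1\atop a+a',\ c};1\right).$$
   Context: $(\alpha)_n$ is the Pochhammer symbol. The product $(x+y)^j\,{}_2F_1(-j,c+c'+j-1;c;x/(x+y))$ is understood as the polynomial $\sum_{m=0}^j\frac{(-j)_m(c+c'+j-1)_m}{(c)_m\,m!}x^m(x+y)^{j-m}$. *)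

theory Defs
  imports "HOL-Analysis.Analysis"
begin

definition hyp1F1 :: "complex \<Rightarrow> complex \<Rightarrow> complex \<Rightarrow> complex" where
  "hyp1F1 a c z = (\<Sum>n. pochhammer a n / (pochhammer c n * fact n) * z ^ n)"

definition hyp3F2_term :: "nat \<Rightarrow> complex \<Rightarrow> complex \<Rightarrow> complex \<Rightarrow> complex \<Rightarrow> complex" where
  "hyp3F2_term j a1 a2 b1 b2 =
     (\<Sum>m\<le>j. pochhammer (- of_nat j) m * pochhammer a1 m * pochhammer a2 m
              / (pochhammer b1 m * pochhammer b2 m * fact m))"

text \<open>The homogenised polynomial (x+y)^j 2F1(-j, e; c; x/(x+y)).\<close>
definition hom2F1 :: "nat \<Rightarrow> complex \<Rightarrow> complex \<Rightarrow> complex \<Rightarrow> complex \<Rightarrow> complex" where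
  "hom2F1 j e c x y =
     (\<Sum>m\<le>j. pochhammer (- of_nat j) m * pochhammer e m / (pochhammer c m * fact m)
              * x ^ m * (x + y) ^ (j - m))"

definition coeffD :: "complex \<Rightarrow> complex \<Rightarrow> complex \<Rightarrow> complex \<Rightarrow> nat \<Rightarrow> complex" where
  "coeffD a a' c c' j =
     pochhammer c j * pochhammer (a + a') j
       / (fact j * pochhammer c' j * pochhammer (c + c' + of_nat j - 1) j)
     * hyp3F2_term j a (c + c' + of_nat j - 1) (a + a') c"

end

theory Submission
  imports Defs "Jordan_Normal_Form.Determinant" "HOL-Computational_Algebra.Formal_Power_Series"
begin

definition Sop :: "(nat \<Rightarrow> complex) \<Rightarrow> nat \<Rightarrow> complex" where
  "Sop f p = (if p = 0 then 0 else f (p - 1)) + f p"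

primrec Sk :: "nat \<Rightarrow> (nat \<Rightarrow> complex) \<Rightarrow> nat \<Rightarrow> complex" where
  "Sk 0 f = f" | "Sk (Suc k) f = Sop (Sk k f)"

definition supp :: "nat \<Rightarrow> (nat \<Rightarrow> complex) \<Rightarrow> bool" where
  "supp d f \<longleftrightarrow> (\<forall>p>d. f p = 0)"

lemma supp_Sop: "supp d f \<Longrightarrow> supp (Suc d) (Sop f)"
  by (auto simp: supp_def Sop_def)

lemma supp_Sk: "supp d f \<Longrightarrow> supp (d + k) (Sk k f)"
  by (induction k) (auto intro: supp_Sop)

lemma Sop_scale: "Sop (\<lambda>p. u * f p) = (\<lambda>p. u * Sop f p)"
  by (auto simp: Sop_def fun_eq_iff algebra_simps)

lemma Sop_zero: "Sop (\<lambda>p. 0) = (\<lambda>p. 0)"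
  by (auto simp: Sop_def fun_eq_iff)

lemma Sop_sum: "Sop (\<lambda>p. \<Sum>i\<in>A. F i p) = (\<lambda>p. \<Sum>i\<in>A. Sop (F i) p)"
  by (auto simp: Sop_def fun_eq_iff sum.distrib)

locale hyp =
  fixes c c' :: complex
  assumes c_ok: "\<And>n::nat. c \<noteq> - of_nat n"
    and c'_ok: "\<And>n::nat. c' \<noteq> - of_nat n"
    and cc_ok: "\<And>n::nat. c + c' \<noteq> - of_nat n"
begin

definition w :: "nat \<Rightarrow> nat \<Rightarrow> complex" where
  "w d p = fact p * pochhammer c p * fact (d - p) * pochhammer c' (d - p)"

definition inn :: "nat \<Rightarrow> (nat \<Rightarrow> complex) \<Rightarrow> (nat \<Rightarrow> complex) \<Rightarrow> complex" where
  "inn d f g = (\<Sum>p\<le>d. f p * g p * w d p)"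

definition Dop :: "nat \<Rightarrow> (nat \<Rightarrow> complex) \<Rightarrow> nat \<Rightarrow> complex" where
  "Dop d g p = of_nat (Suc p) * (c + of_nat p) * g (Suc p)
     + of_nat (Suc d - p) * (c' + of_nat (d - p)) * g p"

lemma w_Suc1: "w (Suc d) (Suc p) = of_nat (Suc p) * (c + of_nat p) * w d p"
  by (simp add: w_def pochhammer_Suc algebra_simps)

lemma w_Suc2: "p \<le> d \<Longrightarrow> w (Suc d) p = of_nat (Suc d - p) * (c' + of_nat (d - p)) * w d p"
  by (simp add: w_def Suc_diff_le pochhammer_Suc algebra_simps)

lemma inn_sym: "inn d f g = inn d g f"
  by (simp add: inn_def mult_ac)

lemma inn_scale: "inn d f (\<lambda>p. u * g p) = u * inn d f g"
  by (simp add: inn_def sum_distrib_left mult_ac)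

lemma inn_zero: "inn d f (\<lambda>p. 0) = 0"
  by (simp add: inn_def)

lemma adjoint:
  assumes "supp d f"
  shows "inn (Suc d) (Sop f) g = inn d f (Dop d g)"
proof -
  have "inn (Suc d) (Sop f) g = (\<Sum>p\<le>Suc d. (if p = 0 then 0 else f (p - 1)) * g p * w (Suc d) p)
        + (\<Sum>p\<le>Suc d. f p * g p * w (Suc d) p)"
    by (simp add: inn_def Sop_def sum.distrib algebra_simps)
  also have "(\<Sum>p\<le>Suc d. (if p = 0 then 0 else f (p - 1)) * g p * w (Suc d) p)
      = (\<Sum>p\<le>d. f p * g (Suc p) * w (Suc d) (Suc p))"
    by (subst sum.atMost_Suc_shift) simp
  also have "(\<Sum>p\<le>Suc d. f p * g p * w (Suc d) p) = (\<Sum>p\<le>d. f p * g p * w (Suc d) p)"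
    using assms by (simp add: supp_def)
  also have "(\<Sum>p\<le>d. f p * g (Suc p) * w (Suc d) (Suc p)) + (\<Sum>p\<le>d. f p * g p * w (Suc d) p)
      = inn d f (Dop d g)"
    unfolding inn_def Dop_def sum.distrib[symmetric]
    by (rule sum.cong) (auto simp: w_Suc1 w_Suc2 algebra_simps)
  finally show ?thesis .
qed

lemma comm0:
  assumes "supp 0 f"
  shows "Dop 0 (Sop f) p = (c + c') * f p"
  using assms by (cases p) (auto simp: supp_def Dop_def Sop_def algebra_simps)

lemma commS:
  assumes "supp (Suc d) f"
  shows "Dop (Suc d) (Sop f) p = Sop (Dop d f) p + (2 * of_nat (Suc d) + c + c') * f p"
proof (cases p)
  case 0
  then show ?thesis by (simp add: Dop_def Sop_def algebra_simps)
next
  case (Suc q)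
  show ?thesis
  proof (cases "q < d")
    case True
    then obtain r where r: "d = q + Suc r" by (metis less_imp_Suc_add add_Suc_right add_Suc)
    show ?thesis unfolding Suc r by (simp add: Dop_def Sop_def algebra_simps)
  next
    case False
    then obtain r where r: "q = d + r" by (metis le_iff_add not_less)
    have z: "f (Suc (Suc (d + r))) = 0" "f (Suc (Suc (Suc (d + r)))) = 0"
      using assms by (auto simp: supp_def)
    have z2: "r > 0 \<Longrightarrow> f (Suc (d + r)) = 0" using assms by (auto simp: supp_def)
    show ?thesis unfolding Suc r using z z2
      by (cases r) (simp_all add: Dop_def Sop_def algebra_simps)
  qed
qed

definition ker :: "nat \<Rightarrow> (nat \<Rightarrow> complex) \<Rightarrow> bool" where
  "ker j h \<longleftrightarrow> supp j h \<and> (\<forall>d. j = Suc d \<longrightarrow> Dop d h = (\<lambda>_. 0))"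

lemma D_Sk:
  assumes "ker j h"
  shows "Dop (j + k) (Sk (Suc k) h) = (\<lambda>p. of_nat (Suc k) * (2 * of_nat j + of_nat k + c + c') * Sk k h p)"
proof (induction k)
  case 0
  show ?case
  proof (cases j)
    case 0
    then show ?thesis using assms comm0 by (auto simp: ker_def fun_eq_iff algebra_simps)
  next
    case (Suc d)
    have "Dop (Suc d) (Sop h) p = (2 * of_nat (Suc d) + c + c') * h p" for p
      using commS[of d h p] assms Suc by (simp add: ker_def Sop_def)
    then show ?thesis using Suc by (auto simp: fun_eq_iff algebra_simps)
  qed
next
  case (Suc k)
  have sp: "supp (Suc (j + k)) (Sk (Suc k) h)"
    using supp_Sk[of j h "Suc k"] assms by (simp add: ker_def)
  have "Dop (j + Suc k) (Sk (Suc (Suc k)) h) p =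
      of_nat (Suc (Suc k)) * (2 * of_nat j + of_nat (Suc k) + c + c') * Sk (Suc k) h p" for p
  proof -
    have "Dop (j + Suc k) (Sk (Suc (Suc k)) h) p
        = Sop (Dop (j + k) (Sk (Suc k) h)) p + (2 * of_nat (Suc (j + k)) + c + c') * Sk (Suc k) h p"
      using commS[OF sp, of p] by simp
    also have "Sop (Dop (j + k) (Sk (Suc k) h)) p
        = of_nat (Suc k) * (2 * of_nat j + of_nat k + c + c') * Sk (Suc k) h p"
      unfolding Suc.IH Sop_scale by simp
    finally show ?thesis by (simp add: algebra_simps)
  qed
  then show ?case by (simp add: fun_eq_iff)
qed

lemma orth:
  assumes "ker j h" "ker j' h'"
  shows "j + k = j' + k' \<Longrightarrow> inn (j + k) (Sk k h) (Sk k' h')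
     = (if j = j' then fact k * pochhammer (2 * of_nat j + c + c') k * inn j h h' else 0)"
proof (induction k arbitrary: k')
  case 0
  have jk: "j = j' + k'" using "0" by simp
  show ?case
  proof (cases k')
    case 0
    then show ?thesis using jk by simp
  next
    case (Suc k'')
    have jj: "j = Suc (j' + k'')" using jk Suc by simp
    have "inn j h (Sk k' h') = inn (Suc (j' + k'')) (Sop (Sk k'' h')) h"
      using Suc jj by (simp add: inn_sym)
    also have "\<dots> = inn (j' + k'') (Sk k'' h') (Dop (j' + k'') h)"
      by (rule adjoint) (use supp_Sk assms(2) in \<open>auto simp: ker_def\<close>)
    also have "Dop (j' + k'') h = (\<lambda>_. 0)" using assms(1) jj by (simp add: ker_def)
    finally show ?thesis using jj by (simp add: inn_zero)
  qed
next
  case (Suc k)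
  have sp: "supp (j + k) (Sk k h)" using supp_Sk assms(1) by (auto simp: ker_def)
  have "inn (j + Suc k) (Sk (Suc k) h) (Sk k' h') = inn (j + k) (Sk k h) (Dop (j + k) (Sk k' h'))"
    using adjoint[OF sp] by simp
  also have "\<dots> = (if j = j' then fact (Suc k) * pochhammer (2 * of_nat j + c + c') (Suc k) * inn j h h' else 0)"
  proof (cases k')
    case 0
    have jj: "j' = Suc (j + k)" using Suc.prems 0 by simp
    have "Dop (j + k) h' = (\<lambda>_. 0)" using assms(2) jj by (simp add: ker_def)
    then show ?thesis using 0 jj by (simp add: inn_zero)
  next
    case (Suc k'')
    have e: "j + k = j' + k''" using Suc.prems Suc by simp
    have "Dop (j + k) (Sk k' h') = (\<lambda>p. of_nat (Suc k'') * (2 * of_nat j' + of_nat k'' + c + c') * Sk k'' h' p)"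
      using D_Sk[OF assms(2), of k''] e Suc by simp
    then have "inn (j + k) (Sk k h) (Dop (j + k) (Sk k' h')) =
       of_nat (Suc k'') * (2 * of_nat j' + of_nat k'' + c + c') * inn (j + k) (Sk k h) (Sk k'' h')"
      by (simp add: inn_scale)
    also have "inn (j + k) (Sk k h) (Sk k'' h') = (if j = j' then fact k * pochhammer (2 * of_nat j + c + c') k * inn j h h' else 0)"
      using Suc.IH[OF e] .
    finally show ?thesis using e by (auto simp: pochhammer_Suc algebra_simps)
  qed
  finally show ?case .
qed

end

definition gm :: "nat \<Rightarrow> nat \<Rightarrow> nat \<Rightarrow> complex" where
  "gm m r q = (if m \<le> q then of_nat (r choose (q - m)) else 0)"

lemma Sop_gm: "Sop (gm m r) = gm m (Suc r)"
proof
  fix q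
  show "Sop (gm m r) q = gm m (Suc r) q"
  proof (cases "q < m")
    case True then show ?thesis by (auto simp: Sop_def gm_def)
  next
    case False
    then obtain i where i: "q = m + i" using le_iff_add by (metis not_less)
    show ?thesis
    proof (cases i)
      case 0 then show ?thesis using i by (cases m) (auto simp: Sop_def gm_def)
    next
      case (Suc i') then show ?thesis using i by (auto simp: Sop_def gm_def Suc_diff_le)
    qed
  qed
qed

lemma supp_gm: "supp (m + r) (gm m r)"
  by (auto simp: supp_def gm_def binomial_eq_0)

definition ev :: "nat \<Rightarrow> (nat \<Rightarrow> complex) \<Rightarrow> complex \<Rightarrow> complex \<Rightarrow> complex" where
  "ev d f x y = (\<Sum>p\<le>d. f p * x ^ p * y ^ (d - p))"

definition Phi :: "complex \<Rightarrow> complex \<Rightarrow> nat \<Rightarrow> (nat \<Rightarrow> complex) \<Rightarrow> complex" where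
  "Phi a a' d f = (\<Sum>p\<le>d. f p * pochhammer a p * pochhammer a' (d - p))"

lemma ev_Sop:
  assumes "supp d f"
  shows "ev (Suc d) (Sop f) x y = (x + y) * ev d f x y"
proof -
  have "ev (Suc d) (Sop f) x y = (\<Sum>p\<le>Suc d. (if p = 0 then 0 else f (p - 1)) * x ^ p * y ^ (Suc d - p))
        + (\<Sum>p\<le>Suc d. f p * x ^ p * y ^ (Suc d - p))"
    by (simp add: ev_def Sop_def sum.distrib algebra_simps)
  also have "(\<Sum>p\<le>Suc d. (if p = 0 then 0 else f (p - 1)) * x ^ p * y ^ (Suc d - p))
      = (\<Sum>p\<le>d. f p * x ^ Suc p * y ^ (d - p))"
    by (subst sum.atMost_Suc_shift) simp
  also have "(\<Sum>p\<le>Suc d. f p * x ^ p * y ^ (Suc d - p)) = (\<Sum>p\<le>d. f p * x ^ p * y ^ (Suc d - p))"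
    using assms by (simp add: supp_def)
  also have "(\<Sum>p\<le>d. f p * x ^ Suc p * y ^ (d - p)) + (\<Sum>p\<le>d. f p * x ^ p * y ^ (Suc d - p))
      = (x + y) * ev d f x y"
    unfolding ev_def sum_distrib_left sum.distrib[symmetric]
    by (rule sum.cong) (auto simp: Suc_diff_le algebra_simps)
  finally show ?thesis .
qed

lemma Phi_Sop:
  assumes "supp d f"
  shows "Phi a a' (Suc d) (Sop f) = (a + a' + of_nat d) * Phi a a' d f"
proof -
  have "Phi a a' (Suc d) (Sop f) = (\<Sum>p\<le>Suc d. (if p = 0 then 0 else f (p - 1)) * pochhammer a p * pochhammer a' (Suc d - p))
        + (\<Sum>p\<le>Suc d. f p * pochhammer a p * pochhammer a' (Suc d - p))"
    by (simp add: Phi_def Sop_def sum.distrib algebra_simps)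
  also have "(\<Sum>p\<le>Suc d. (if p = 0 then 0 else f (p - 1)) * pochhammer a p * pochhammer a' (Suc d - p))
      = (\<Sum>p\<le>d. f p * pochhammer a (Suc p) * pochhammer a' (d - p))"
    by (subst sum.atMost_Suc_shift) simp
  also have "(\<Sum>p\<le>Suc d. f p * pochhammer a p * pochhammer a' (Suc d - p)) = (\<Sum>p\<le>d. f p * pochhammer a p * pochhammer a' (Suc d - p))"
    using assms by (simp add: supp_def)
  also have "(\<Sum>p\<le>d. f p * pochhammer a (Suc p) * pochhammer a' (d - p)) + (\<Sum>p\<le>d. f p * pochhammer a p * pochhammer a' (Suc d - p))
      = (a + a' + of_nat d) * Phi a a' d f"
    unfolding Phi_def sum_distrib_left sum.distrib[symmetric]
    by (rule sum.cong) (auto simp: Suc_diff_le pochhammer_Suc of_nat_diff algebra_simps)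
  finally show ?thesis .
qed

lemma ev_Sk: "supp d f \<Longrightarrow> ev (d + k) (Sk k f) x y = (x + y) ^ k * ev d f x y"
proof (induction k)
  case (Suc k)
  then show ?case using ev_Sop[OF supp_Sk[OF Suc.prems, of k]] by simp
qed simp

lemma Phi_Sk: "supp d f \<Longrightarrow> Phi a a' (d + k) (Sk k f) = pochhammer (a + a' + of_nat d) k * Phi a a' d f"
proof (induction k)
  case (Suc k)
  then show ?case using Phi_Sop[OF supp_Sk[OF Suc.prems, of k], of a a']
    by (simp add: pochhammer_Suc algebra_simps)
qed simp

lemma Sk_gm: "Sk k (gm m r) = gm m (r + k)"
  by (induction k) (auto simp: Sop_gm)

lemma ev_gm: "ev (m + r) (gm m r) x y = x ^ m * (x + y) ^ r"
proof -
  have "ev m (gm m 0) x y = x ^ m"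
  proof -
    have "ev m (gm m 0) x y = (\<Sum>p\<in>{m}. gm m 0 p * x ^ p * y ^ (m - p))"
      unfolding ev_def by (rule sum.mono_neutral_right) (auto simp: gm_def)
    then show ?thesis by (simp add: gm_def)
  qed
  then show ?thesis using ev_Sk[OF supp_gm[of m 0], of r x y] by (simp add: Sk_gm)
qed

lemma Phi_gm: "Phi a a' (m + r) (gm m r) = pochhammer a m * pochhammer (a + a' + of_nat m) r"
proof -
  have "Phi a a' m (gm m 0) = pochhammer a m"
  proof -
    have "Phi a a' m (gm m 0) = (\<Sum>p\<in>{m}. gm m 0 p * pochhammer a p * pochhammer a' (m - p))"
      unfolding Phi_def by (rule sum.mono_neutral_right) (auto simp: gm_def)
    then show ?thesis by (simp add: gm_def)
  qed
  then show ?thesis using Phi_Sk[OF supp_gm[of m 0], of a a' r] by (simp add: Sk_gm mult.commute)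
qed

lemma ev_sum: "ev d (\<lambda>q. \<Sum>i\<in>A. F i q) x y = (\<Sum>i\<in>A. ev d (F i) x y)"
  unfolding ev_def by (simp add: sum_distrib_right sum.swap[of _ A])

lemma Phi_sum: "Phi a a' d (\<lambda>q. \<Sum>i\<in>A. F i q) = (\<Sum>i\<in>A. Phi a a' d (F i))"
  unfolding Phi_def by (simp add: sum_distrib_right sum.swap[of _ A])

lemma ev_scale: "ev d (\<lambda>q. u * f q) x y = u * ev d f x y"
  unfolding ev_def by (simp add: sum_distrib_left mult_ac)

lemma Phi_scale: "Phi a a' d (\<lambda>q. u * f q) = u * Phi a a' d f"
  unfolding Phi_def by (simp add: sum_distrib_left mult_ac)

lemma poch_negnat: "pochhammer (- of_nat j :: complex) m = (-1) ^ m * fact m * of_nat (j choose m)"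
proof -
  have "(of_nat j :: complex) gchoose m = (- 1) ^ m * pochhammer (- of_nat j) m / fact m"
    by (rule gbinomial_pochhammer)
  then have "of_nat (j choose m) = ((- 1) ^ m * pochhammer (- of_nat j) m / fact m :: complex)"
    by (simp add: binomial_gbinomial)
  then have h: "fact m * of_nat (j choose m) = ((- 1) ^ m * pochhammer (- of_nat j) m :: complex)"
    by (simp add: field_simps)
  have "((- 1) ^ m * (- 1) ^ m :: complex) = 1" by (induction m) auto
  then have "(- 1) ^ m * (fact m * of_nat (j choose m)) = (pochhammer (- of_nat j) m :: complex)"
    unfolding h by (metis mult.assoc mult_1)
  then show ?thesis by (simp add: mult_ac)
qed

context hyp
begin

lemma poch_c_nz: "pochhammer c n \<noteq> 0"
  using c_ok by (auto simp: pochhammer_eq_0_iff)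
lemma poch_c'_nz: "pochhammer c' n \<noteq> 0"
  using c'_ok by (auto simp: pochhammer_eq_0_iff)
lemma poch_cc_nz: "pochhammer (c + c' + of_nat m) n \<noteq> 0"
proof
  assume "pochhammer (c + c' + of_nat m) n = 0"
  then obtain k where "c + c' + of_nat m = - of_nat k" by (auto simp: pochhammer_eq_0_iff)
  then have "c + c' = - of_nat (m + k)" by (simp add: algebra_simps)
  then show False using cc_ok by blast
qed
lemma w_nz: "w d p \<noteq> 0"
  by (simp add: w_def poch_c_nz poch_c'_nz)

definition kap :: "nat \<Rightarrow> nat \<Rightarrow> complex" where
  "kap j q = (- 1) ^ q * of_nat (j choose q) * pochhammer c' j / (pochhammer c q * pochhammer c' (j - q))"

definition cf :: "nat \<Rightarrow> nat \<Rightarrow> complex" where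
  "cf j m = pochhammer (- of_nat j) m * pochhammer (c + c' + of_nat j - 1) m / (pochhammer c m * fact m)"

lemma supp_kap: "supp j (kap j)"
  by (auto simp: supp_def kap_def binomial_eq_0)

lemma Dop_kap: "Dop d (kap (Suc d)) = (\<lambda>_. 0)"
proof
  fix p
  show "Dop d (kap (Suc d)) p = 0"
  proof (cases "p \<le> d")
    case False
    then show ?thesis by (simp add: Dop_def kap_def binomial_eq_0)
  next
    case True
    then obtain r where r: "d = p + r" using le_iff_add by blast
    have bn: "Suc p * (Suc (p + r) choose Suc p) = Suc r * (Suc (p + r) choose p)"
      using binomial_absorption[of p "Suc (p + r)"] binomial_absorb_comp[of "Suc (p + r)" p]
      by simp
    have bc: "(of_nat (Suc p) :: complex) * of_nat (Suc (p + r) choose Suc p) = of_nat (Suc r) * of_nat (Suc (p + r) choose p)"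
      by (metis bn of_nat_mult)
    have p1: "pochhammer c (Suc p) = pochhammer c p * (c + of_nat p)" by (simp add: pochhammer_Suc)
    have p2: "pochhammer c' (Suc r) = pochhammer c' r * (c' + of_nat r)" by (simp add: pochhammer_Suc)
    have nz: "c + of_nat p \<noteq> 0" "c' + of_nat r \<noteq> 0"
      using c_ok[of p] c'_ok[of r] by (auto simp: add_eq_0_iff)
    have gen: "n * u * ((- 1) ^ Suc p * C * P / ((A * u) * B)) = - ((- 1) ^ p * (n * C) * P / (A * B))"
      if "u \<noteq> 0" "A \<noteq> 0" "B \<noteq> 0" for u A B n C P :: complex
      using that by (simp add: field_simps)
    have t1: "of_nat (Suc p) * (c + of_nat p) * kap (Suc (p + r)) (Suc p) =
       - ((- 1) ^ p * (of_nat (Suc p) * of_nat (Suc (p + r) choose Suc p)) * pochhammer c' (Suc (p + r))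
          / (pochhammer c p * pochhammer c' r))"
      unfolding kap_def p1 using gen[OF nz(1) poch_c_nz[of p] poch_c'_nz[of r]]
      by (simp del: binomial_Suc_Suc of_nat_Suc power_Suc)
    have gen2: "n * u * ((- 1) ^ p * C * P / (A * (B * u))) = (- 1) ^ p * (n * C) * P / (A * B)"
      if "u \<noteq> 0" "A \<noteq> 0" "B \<noteq> 0" for u A B n C P :: complex
      using that by (simp add: field_simps)
    have t2: "of_nat (Suc r) * (c' + of_nat r) * kap (Suc (p + r)) p =
       ((- 1) ^ p * (of_nat (Suc r) * of_nat (Suc (p + r) choose p)) * pochhammer c' (Suc (p + r))
          / (pochhammer c p * pochhammer c' r))"
      unfolding kap_def using gen2[OF nz(2) poch_c_nz[of p] poch_c'_nz[of r]]
      by (simp del: binomial_Suc_Suc of_nat_Suc power_Suc add: Suc_diff_le p2)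
    have "Dop d (kap (Suc d)) p = of_nat (Suc p) * (c + of_nat p) * kap (Suc (p + r)) (Suc p)
          + of_nat (Suc r) * (c' + of_nat r) * kap (Suc (p + r)) p"
      unfolding r Dop_def by (simp del: binomial_Suc_Suc of_nat_Suc add: Suc_diff_le)
    also have "\<dots> = (- 1) ^ p * pochhammer c' (Suc (p + r)) / (pochhammer c p * pochhammer c' r) *
          (- (of_nat (Suc p) * of_nat (Suc (p + r) choose Suc p)) + of_nat (Suc r) * of_nat (Suc (p + r) choose p))"
      unfolding t1 t2 using poch_c_nz[of p] poch_c'_nz[of r]
      by (simp del: binomial_Suc_Suc of_nat_Suc add: field_simps)
    also have "\<dots> = 0" using bc by simp
    finally show ?thesis .
  qed
qed

lemma ker_kap: "ker j (kap j)"
  unfolding ker_def using supp_kap Dop_kap by auto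

end

context hyp
begin

lemma inn_add1: "inn d (\<lambda>q. f q + g q) h = inn d f h + inn d g h"
  by (simp add: inn_def sum.distrib algebra_simps)
lemma inn_scale1: "inn d (\<lambda>q. u * f q) h = u * inn d f h"
  by (simp add: inn_def sum_distrib_left mult_ac)


lemma H_kap: "(\<Sum>m\<le>j. cf j m * gm m (j - m) q) = kap j q"
proof (cases "q \<le> j")
  case False
  then show ?thesis by (auto simp: kap_def gm_def binomial_eq_0 intro!: sum.neutral)
next
  case True
  let ?e = "c + c' + of_nat j - 1"
  have "(\<Sum>m\<le>j. cf j m * gm m (j - m) q) = (\<Sum>m\<le>q. cf j m * gm m (j - m) q)"
    using True by (intro sum.mono_neutral_right) (auto simp: gm_def)
  also have "\<dots> = (\<Sum>m=0..q. of_nat (j choose q) * (pochhammer ?e m * pochhammer (- of_nat q) m / (of_nat (fact m) * pochhammer c m)))"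
    unfolding atMost_atLeast0
  proof (rule sum.cong[OF refl])
    fix m assume m: "m \<in> {0..q}"
    have cm: "(j choose q) * (q choose m) = (j choose m) * ((j - m) choose (q - m))"
      using choose_mult[of m q j] m True by auto
    have cm': "(of_nat (j choose m) :: complex) * of_nat ((j - m) choose (q - m)) = of_nat (j choose q) * of_nat (q choose m)"
      by (metis cm of_nat_mult)
    show "cf j m * gm m (j - m) q = of_nat (j choose q) * (pochhammer ?e m * pochhammer (- of_nat q) m / (of_nat (fact m) * pochhammer c m))"
      using m poch_c_nz[of m] unfolding cf_def gm_def poch_negnat
      by (auto simp: field_simps cm'[symmetric])
  qed
  also have "\<dots> = of_nat (j choose q) * (pochhammer (c - ?e) q / pochhammer c q)"
    by (subst sum_distrib_left[symmetric], subst Vandermonde_pochhammer) (use c_ok in auto)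
  also have "pochhammer (c - ?e) q = (- 1) ^ q * pochhammer (c' + of_nat (j - q)) q"
  proof -
    have "c - ?e = - (c' + of_nat j - 1)" by simp
    then have "pochhammer (c - ?e) q = pochhammer (- (c' + of_nat j - 1)) q" by (simp only:)
    also have "\<dots> = (- 1) ^ q * pochhammer (c' + of_nat j - 1 - of_nat q + 1) q"
      by (rule pochhammer_minus)
    finally have "pochhammer (c - ?e) q = (- 1) ^ q * pochhammer (c' + of_nat j - 1 - of_nat q + 1) q" .
    also have "c' + of_nat j - 1 - of_nat q + 1 = c' + of_nat (j - q)" using True by (simp add: of_nat_diff)
    finally show ?thesis .
  qed
  also have "pochhammer c' j = pochhammer c' (j - q) * pochhammer (c' + of_nat (j - q)) q"
    using pochhammer_product[of "j - q" j c'] True by simp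
  then have "of_nat (j choose q) * ((- 1) ^ q * pochhammer (c' + of_nat (j - q)) q / pochhammer c q) = kap j q"
    unfolding kap_def using poch_c_nz[of q] poch_c'_nz[of "j - q"] by (simp add: field_simps)
  finally show ?thesis .
qed

lemma kap_eq: "kap j = (\<lambda>q. \<Sum>m\<le>j. cf j m * gm m (j - m) q)"
  using H_kap by auto

lemma ev_kap: "ev j (kap j) x y = hom2F1 j (c + c' + of_nat j - 1) c x y"
proof -
  have "ev j (kap j) x y = (\<Sum>m\<le>j. cf j m * ev j (gm m (j - m)) x y)"
    unfolding kap_eq ev_sum ev_scale ..
  also have "\<dots> = (\<Sum>m\<le>j. cf j m * (x ^ m * (x + y) ^ (j - m)))"
  proof (rule sum.cong[OF refl])
    fix m assume "m \<in> {..j}"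
    then show "cf j m * ev j (gm m (j - m)) x y = cf j m * (x ^ m * (x + y) ^ (j - m))"
      using ev_gm[of m "j - m" x y] by simp
  qed
  finally show ?thesis by (simp add: hom2F1_def cf_def mult_ac)
qed

lemma Phi_kap: "Phi a a' j (kap j) = (\<Sum>m\<le>j. cf j m * (pochhammer a m * pochhammer (a + a' + of_nat m) (j - m)))"
proof -
  have "Phi a a' j (kap j) = (\<Sum>m\<le>j. cf j m * Phi a a' j (gm m (j - m)))"
    unfolding kap_eq Phi_sum Phi_scale ..
  also have "\<dots> = (\<Sum>m\<le>j. cf j m * (pochhammer a m * pochhammer (a + a' + of_nat m) (j - m)))"
  proof (rule sum.cong[OF refl])
    fix m assume "m \<in> {..j}"
    then show "cf j m * Phi a a' j (gm m (j - m)) = cf j m * (pochhammer a m * pochhammer (a + a' + of_nat m) (j - m))"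
      using Phi_gm[of a a' m "j - m"] by simp
  qed
  finally show ?thesis .
qed

lemma coeffD_Phi:
  assumes ab: "\<And>n::nat. a + a' \<noteq> - of_nat n"
  shows "coeffD a a' c c' j = Phi a a' j (kap j) * pochhammer c j
           / (fact j * pochhammer c' j * pochhammer (c + c' + of_nat j - 1) j)"
proof -
  have nz: "pochhammer (a + a') m \<noteq> 0" for m using ab by (auto simp: pochhammer_eq_0_iff)
  have "pochhammer (a + a') j * hyp3F2_term j a (c + c' + of_nat j - 1) (a + a') c
      = (\<Sum>m\<le>j. cf j m * (pochhammer a m * pochhammer (a + a' + of_nat m) (j - m)))"
    unfolding hyp3F2_term_def sum_distrib_left
  proof (rule sum.cong[OF refl])
    fix m assume "m \<in> {..j}"
    then have "pochhammer (a + a') j = pochhammer (a + a') m * pochhammer (a + a' + of_nat m) (j - m)"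
      using pochhammer_product[of m j "a + a'"] by simp
    then show "pochhammer (a + a') j *
         (pochhammer (- of_nat j) m * pochhammer a m * pochhammer (c + c' + of_nat j - 1) m /
          (pochhammer (a + a') m * pochhammer c m * fact m)) =
         cf j m * (pochhammer a m * pochhammer (a + a' + of_nat m) (j - m))"
      unfolding cf_def using nz[of m] poch_c_nz[of m] by (simp add: field_simps)
  qed
  then show ?thesis unfolding coeffD_def Phi_kap[symmetric]
    by (simp add: field_simps)
qed

lemma norm_kap: "inn j (kap j) (kap j) = fact j * pochhammer (c + c' + of_nat j - 1) j * pochhammer c' j / pochhammer c j"
proof (cases j)
  case 0
  then show ?thesis by (simp add: inn_def kap_def w_def)
next
  case (Suc d)
  define R where "R = (\<lambda>q. \<Sum>m\<le>d. cf j m * gm m (d - m) q)"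
  have dec: "kap j = (\<lambda>q. cf j j * gm j 0 q + Sop R q)"
  proof
    fix q
    have "kap j q = (\<Sum>m\<le>d. cf j m * gm m (j - m) q) + cf j j * gm j 0 q"
      unfolding H_kap[symmetric] Suc by simp
    also have "(\<Sum>m\<le>d. cf j m * gm m (j - m) q) = Sop R q"
      unfolding R_def Sop_sum Sop_scale
      by (rule sum.cong[OF refl]) (simp add: Suc Suc_diff_le Sop_gm)
    finally show "kap j q = cf j j * gm j 0 q + Sop R q" by simp
  qed
  have sR: "supp d R" unfolding R_def supp_def gm_def by (auto simp: binomial_eq_0 intro!: sum.neutral)
  have i1: "inn j (gm j 0) (kap j) = kap j j * w j j"
  proof -
    have "inn j (gm j 0) (kap j) = (\<Sum>p\<in>{j}. gm j 0 p * kap j p * w j p)"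
      unfolding inn_def by (rule sum.mono_neutral_right) (auto simp: gm_def)
    then show ?thesis by (simp add: gm_def)
  qed
  have i2: "inn j (Sop R) (kap j) = 0"
    unfolding Suc using adjoint[OF sR, of "kap (Suc d)"] Dop_kap[of d] by (simp add: inn_zero)
  have "inn j (kap j) (kap j) = cf j j * (kap j j * w j j)"
    apply (subst (1) dec)
    unfolding inn_add1 inn_scale1 i1 i2 by simp
  also have "\<dots> = fact j * pochhammer (c + c' + of_nat j - 1) j * pochhammer c' j / pochhammer c j"
  proof -
    have s: "((- 1) ^ j * (- 1) ^ j :: complex) = 1" by (induction j) auto
    show ?thesis
      unfolding cf_def kap_def w_def pochhammer_same using poch_c_nz[of j]
      by (simp add: field_simps s)
  qed
  finally show ?thesis .
qed

end

lemma rearr: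
  fixes B :: "nat \<Rightarrow> nat \<Rightarrow> complex"
  assumes comp: "\<And>p q. p \<le> N \<Longrightarrow> q \<le> N \<Longrightarrow> (\<Sum>j\<le>N. W p * B j p / n j * B j q) = (if p = q then 1 else 0)"
    and W: "\<And>p. W p \<noteq> 0"
  shows "(\<Sum>j\<le>N. (\<Sum>q\<le>N. B j q * A q) / n j * (\<Sum>p\<le>N. B j p * X p)) = (\<Sum>p\<le>N. X p * A p / W p)"
proof -
  have "(\<Sum>j\<le>N. (\<Sum>q\<le>N. B j q * A q) / n j * (\<Sum>p\<le>N. B j p * X p))
      = (\<Sum>j\<le>N. \<Sum>p\<le>N. \<Sum>q\<le>N. X p * A q / W p * (W p * B j p / n j * B j q))"
  proof (rule sum.cong[OF refl])
    fix j
    have "(\<Sum>q\<le>N. B j q * A q) / n j * (\<Sum>p\<le>N. B j p * X p) = (\<Sum>p\<le>N. \<Sum>q\<le>N. (B j q * A q) / n j * (B j p * X p))"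
      by (simp add: sum_distrib_left sum_distrib_right sum_divide_distrib)
    also have "\<dots> = (\<Sum>p\<le>N. \<Sum>q\<le>N. X p * A q / W p * (W p * B j p / n j * B j q))"
      using W by (intro sum.cong refl) (simp add: field_simps)
    finally show "(\<Sum>q\<le>N. B j q * A q) / n j * (\<Sum>p\<le>N. B j p * X p) = (\<Sum>p\<le>N. \<Sum>q\<le>N. X p * A q / W p * (W p * B j p / n j * B j q))" .
  qed
  also have "\<dots> = (\<Sum>p\<le>N. \<Sum>j\<le>N. \<Sum>q\<le>N. X p * A q / W p * (W p * B j p / n j * B j q))"
    by (rule sum.swap)
  also have "\<dots> = (\<Sum>p\<le>N. \<Sum>q\<le>N. \<Sum>j\<le>N. X p * A q / W p * (W p * B j p / n j * B j q))"
    by (intro sum.cong refl sum.swap)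
  also have "\<dots> = (\<Sum>p\<le>N. \<Sum>q\<le>N. X p * A q / W p * (if p = q then 1 else 0))"
  proof (intro sum.cong refl)
    fix p q assume pq: "p \<in> {..N}" "q \<in> {..N}"
    have "(\<Sum>j\<le>N. X p * A q / W p * (W p * B j p / n j * B j q)) = X p * A q / W p * (\<Sum>j\<le>N. W p * B j p / n j * B j q)"
      by (rule sum_distrib_left[symmetric])
    then show "(\<Sum>j\<le>N. X p * A q / W p * (W p * B j p / n j * B j q)) = X p * A q / W p * (if p = q then 1 else 0)"
      using comp[of p q] pq by simp
  qed
  also have "\<dots> = (\<Sum>p\<le>N. X p * A p / W p)"
  proof (rule sum.cong[OF refl])
    fix p assume p: "p \<in> {..N}"
    have "(\<Sum>q\<le>N. X p * A q / W p * (if p = q then 1 else 0)) = (\<Sum>q\<le>N. if p = q then X p * A q / W p else 0)"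
      by (intro sum.cong) auto
    also have "\<dots> = X p * A p / W p" using p by (simp add: sum.delta)
    finally show "(\<Sum>q\<le>N. X p * A q / W p * (if p = q then 1 else 0)) = X p * A p / W p" .
  qed
  finally show ?thesis .
qed

context hyp
begin

definition bb :: "nat \<Rightarrow> nat \<Rightarrow> nat \<Rightarrow> complex" where
  "bb N j = Sk (N - j) (kap j)"

definition nn :: "nat \<Rightarrow> nat \<Rightarrow> complex" where
  "nn N j = fact (N - j) * pochhammer (2 * of_nat j + c + c') (N - j)
     * (fact j * pochhammer (c + c' + of_nat j - 1) j * pochhammer c' j / pochhammer c j)"

lemma poch_e_nz: "pochhammer (c + c' + of_nat j - 1) j \<noteq> 0"
proof (cases j)
  case (Suc d)
  have e: "c + c' + of_nat j - 1 = c + c' + of_nat d" using Suc by simp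
  show ?thesis unfolding e using poch_cc_nz[of d j] .
qed simp

lemma poch_2j_nz: "pochhammer (2 * of_nat j + c + c') n \<noteq> 0"
proof -
  have e: "2 * of_nat j + c + c' = c + c' + of_nat (2 * j)" by simp
  show ?thesis unfolding e using poch_cc_nz[of "2 * j" n] .
qed

lemma nn_nz: "nn N j \<noteq> 0"
  unfolding nn_def using poch_e_nz[of j] poch_2j_nz[of j "N - j"] poch_c_nz[of j] poch_c'_nz[of j]
  by simp

lemma orth_bb:
  assumes "i \<le> N" "j \<le> N"
  shows "inn N (bb N i) (bb N j) = (if i = j then nn N j else 0)"
  using orth[OF ker_kap ker_kap, of i "N - i" j "N - j"] assms
  by (simp add: bb_def nn_def norm_kap)

lemma complete:
  assumes "p \<le> N" "q \<le> N"
  shows "(\<Sum>j\<le>N. w N p * bb N j p / nn N j * bb N j q) = (if p = q then 1 else 0)"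
proof -
  define X where "X = mat (Suc N) (Suc N) (\<lambda>(i, p). bb N i p)"
  define Y where "Y = mat (Suc N) (Suc N) (\<lambda>(p, j). w N p * bb N j p / nn N j)"
  have XC: "X \<in> carrier_mat (Suc N) (Suc N)" unfolding X_def by simp
  have YC: "Y \<in> carrier_mat (Suc N) (Suc N)" unfolding Y_def by simp
  have "X * Y = 1\<^sub>m (Suc N)"
  proof (rule eq_matI)
    fix i j assume ij: "i < dim_row (1\<^sub>m (Suc N))" "j < dim_col (1\<^sub>m (Suc N))"
    then have "(X * Y) $$ (i, j) = (\<Sum>k<Suc N. bb N i k * (w N k * bb N j k / nn N j))"
      by (simp add: X_def Y_def scalar_prod_def atLeast0LessThan)
    also have "\<dots> = inn N (bb N i) (bb N j) / nn N j"
      unfolding inn_def lessThan_Suc_atMost by (simp add: sum_divide_distrib mult_ac)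
    also have "\<dots> = 1\<^sub>m (Suc N) $$ (i, j)"
      using ij orth_bb[of i N j] nn_nz[of N j] by simp
    finally show "(X * Y) $$ (i, j) = 1\<^sub>m (Suc N) $$ (i, j)" .
  qed (auto simp: X_def Y_def)
  then have YX: "Y * X = 1\<^sub>m (Suc N)" by (rule mat_mult_left_right_inverse[OF XC YC])
  have "(Y * X) $$ (p, q) = (\<Sum>j<Suc N. w N p * bb N j p / nn N j * bb N j q)"
    using assms by (simp add: X_def Y_def scalar_prod_def atLeast0LessThan)
  then show ?thesis using assms YX unfolding lessThan_Suc_atMost by simp
qed

lemma termj:
  assumes ab: "\<And>n::nat. a + a' \<noteq> - of_nat n" and j: "j \<le> N"
  shows "coeffD a a' c c' j * hom2F1 j (c + c' + of_nat j - 1) c x y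
      * (pochhammer (a + a' + of_nat j) (N - j) / (pochhammer (c + c' + 2 * of_nat j) (N - j) * fact (N - j)) * (x + y) ^ (N - j))
    = Phi a a' N (bb N j) / nn N j * ev N (bb N j) x y"
proof -
  have P: "Phi a a' N (bb N j) = pochhammer (a + a' + of_nat j) (N - j) * Phi a a' j (kap j)"
    using Phi_Sk[OF supp_kap[of j], of a a' "N - j"] j by (simp add: bb_def)
  have E: "ev N (bb N j) x y = (x + y) ^ (N - j) * hom2F1 j (c + c' + of_nat j - 1) c x y"
    using ev_Sk[OF supp_kap[of j], of "N - j" x y] j by (simp add: bb_def ev_kap)
  have cc: "c + c' + 2 * of_nat j = 2 * of_nat j + c + c'" by simp
  show ?thesis
    unfolding P E coeffD_Phi[OF ab] nn_def cc
    using poch_e_nz[of j] poch_2j_nz[of j "N - j"] poch_c_nz[of j] poch_c'_nz[of j]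
    by (simp add: field_simps)
qed

lemma degN:
  assumes ab: "\<And>n::nat. a + a' \<noteq> - of_nat n"
  shows "(\<Sum>i\<le>N. (pochhammer a i / (pochhammer c i * fact i) * x ^ i) *
                 (pochhammer a' (N - i) / (pochhammer c' (N - i) * fact (N - i)) * y ^ (N - i)))
       = (\<Sum>j\<le>N. coeffD a a' c c' j * hom2F1 j (c + c' + of_nat j - 1) c x y
      * (pochhammer (a + a' + of_nat j) (N - j) / (pochhammer (c + c' + 2 * of_nat j) (N - j) * fact (N - j)) * (x + y) ^ (N - j)))"
proof -
  have "(\<Sum>j\<le>N. coeffD a a' c c' j * hom2F1 j (c + c' + of_nat j - 1) c x y
      * (pochhammer (a + a' + of_nat j) (N - j) / (pochhammer (c + c' + 2 * of_nat j) (N - j) * fact (N - j)) * (x + y) ^ (N - j)))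
      = (\<Sum>j\<le>N. Phi a a' N (bb N j) / nn N j * ev N (bb N j) x y)"
    by (rule sum.cong[OF refl], rule termj[OF ab], simp)
  also have "\<dots> = (\<Sum>j\<le>N. (\<Sum>q\<le>N. bb N j q * (pochhammer a q * pochhammer a' (N - q))) / nn N j
                      * (\<Sum>p\<le>N. bb N j p * (x ^ p * y ^ (N - p))))"
    unfolding Phi_def ev_def by (simp add: mult_ac)
  also have "\<dots> = (\<Sum>p\<le>N. (x ^ p * y ^ (N - p)) * (pochhammer a p * pochhammer a' (N - p)) / w N p)"
    by (rule rearr[OF complete w_nz])
  also have "\<dots> = (\<Sum>i\<le>N. (pochhammer a i / (pochhammer c i * fact i) * x ^ i) *
                 (pochhammer a' (N - i) / (pochhammer c' (N - i) * fact (N - i)) * y ^ (N - i)))"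
    by (rule sum.cong[OF refl]) (simp add: w_def field_simps)
  finally show ?thesis by simp
qed

end

lemma poch_upper: "norm (pochhammer (z::complex) n) \<le> (norm z + 1) ^ n * fact n"
proof (induction n)
  case (Suc n)
  have t: "norm (z + of_nat n) \<le> (norm z + 1) * (of_nat n + 1)"
  proof -
    have "norm (z + of_nat n) \<le> norm z + of_nat n" using norm_triangle_ineq[of z "of_nat n"] by simp
    also have "\<dots> \<le> (norm z + 1) * (of_nat n + 1)" by (simp add: algebra_simps)
    finally show ?thesis .
  qed
  have "norm (pochhammer z (Suc n)) = norm (pochhammer z n) * norm (z + of_nat n)"
    by (simp add: pochhammer_Suc norm_mult)
  also have "\<dots> \<le> ((norm z + 1) ^ n * fact n) * ((norm z + 1) * (of_nat n + 1))"
    by (rule mult_mono[OF Suc t]) auto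
  also have "\<dots> = (norm z + 1) ^ Suc n * fact (Suc n)" by (simp add: algebra_simps)
  finally show ?case .
qed simp

lemma poch_upper':
  assumes "norm z + 1 \<le> A"
  shows "norm (pochhammer (z::complex) n) \<le> A ^ n * fact n"
proof -
  have "(norm z + 1) ^ n \<le> A ^ n" by (rule power_mono) (use assms in auto)
  then have "(norm z + 1) ^ n * fact n \<le> A ^ n * fact n" by (simp add: mult_right_mono)
  then show ?thesis using poch_upper[of z n] by linarith
qed

lemma poch_lower:
  assumes "0 \<le> \<mu>" "\<And>n. \<mu> * (of_nat n + 1) \<le> norm (z + of_nat n)"
  shows "\<mu> ^ n * fact n \<le> norm (pochhammer (z + of_nat ii :: complex) n)"
proof (induction n)
  case (Suc n)
  have t: "\<mu> * (of_nat n + 1) \<le> norm (z + of_nat ii + of_nat n)"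
  proof -
    have "\<mu> * (of_nat n + 1) \<le> \<mu> * (of_nat (ii + n) + 1)" using assms(1) by (intro mult_left_mono) auto
    also have "\<dots> \<le> norm (z + of_nat (ii + n))" by (rule assms(2))
    finally show ?thesis by (simp add: add.assoc)
  qed
  have "\<mu> ^ Suc n * fact (Suc n) = (\<mu> ^ n * fact n) * (\<mu> * (of_nat n + 1))" by (simp add: algebra_simps)
  also have "\<dots> \<le> norm (pochhammer (z + of_nat ii) n) * norm (z + of_nat ii + of_nat n)"
    by (rule mult_mono[OF Suc t]) (use assms(1) in auto)
  also have "\<dots> = norm (pochhammer (z + of_nat ii) (Suc n))" by (simp add: pochhammer_Suc norm_mult)
  finally show ?case .
qed simp

lemma poch_lower0:
  assumes "0 \<le> \<mu>" "\<And>n. \<mu> * (of_nat n + 1) \<le> norm (z + of_nat n)"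
  shows "\<mu> ^ n * fact n \<le> norm (pochhammer (z :: complex) n)"
  using poch_lower[OF assms, where ii=0 and n=n] by simp

lemma good_lower:
  fixes z :: complex
  assumes "\<And>n::nat. z \<noteq> - of_nat n"
  shows "\<exists>\<mu>>0. \<mu> \<le> 1 \<and> (\<forall>n. \<mu> * (of_nat n + 1) \<le> norm (z + of_nat n))"
proof -
  define K where "K = nat \<lceil>2 * norm z\<rceil> + 1"
  define S where "S = (\<lambda>n. norm (z + of_nat n) / (of_nat n + 1)) ` {..<K}"
  define m0 where "m0 = Min S"
  have Sfin: "finite S" "S \<noteq> {}" unfolding S_def K_def by auto
  have Spos: "\<forall>s\<in>S. s > 0"
  proof
    fix s assume "s \<in> S"
    then obtain n where s: "s = norm (z + of_nat n) / (of_nat n + 1)" unfolding S_def by auto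
    have "z + of_nat n \<noteq> 0" using assms[of n] by (auto simp: add_eq_0_iff)
    then show "s > 0" unfolding s by (auto intro!: divide_pos_pos)
  qed
  have m0pos: "m0 > 0" unfolding m0_def using Sfin Spos by auto
  define \<mu> where "\<mu> = min (1/4) m0"
  have "\<mu> > 0" "\<mu> \<le> 1" using m0pos by (auto simp: \<mu>_def)
  moreover have "\<mu> * (of_nat n + 1) \<le> norm (z + of_nat n)" for n
  proof (cases "n < K")
    case True
    then have "norm (z + of_nat n) / (of_nat n + 1) \<in> S" unfolding S_def by auto
    then have "m0 \<le> norm (z + of_nat n) / (of_nat n + 1)" unfolding m0_def using Sfin by auto
    then have "m0 * (of_nat n + 1) \<le> norm (z + of_nat n)" by (simp add: field_simps)
    moreover have "\<mu> * (of_nat n + 1) \<le> m0 * (of_nat n + 1)" by (intro mult_right_mono) (auto simp: \<mu>_def)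
    ultimately show ?thesis by linarith
  next
    case False
    then have nK: "real n \<ge> 2 * norm z + 1" unfolding K_def by linarith
    have "real n = norm ((z + of_nat n) - z)" by simp
    also have "\<dots> \<le> norm (z + of_nat n) + norm z" by (rule norm_triangle_ineq4)
    finally have "real n \<le> norm (z + of_nat n) + norm z" .
    moreover have "0 \<le> real n" by simp
    ultimately have "real n + 1 \<le> 2 * norm (z + of_nat n)" using nK by linarith
    then have "(real n + 1) / 4 \<le> norm (z + of_nat n)" by (simp add: field_simps)
    moreover have "\<mu> * (of_nat n + 1) \<le> (1/4) * (real n + 1)" by (intro mult_right_mono) (auto simp: \<mu>_def)
    ultimately show ?thesis by linarith
  qed
  ultimately show ?thesis by blast
qed

lemma poch_ratio:
  assumes "r \<ge> 0" "\<And>i. i < k \<Longrightarrow> norm (z1 + of_nat i) \<le> r * norm (z2 + of_nat i)"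
  shows "norm (pochhammer (z1::complex) k) \<le> r ^ k * norm (pochhammer (z2::complex) k)"
  using assms(2)
proof (induction k)
  case (Suc k)
  have "norm (pochhammer z1 (Suc k)) = norm (pochhammer z1 k) * norm (z1 + of_nat k)"
    by (simp add: pochhammer_Suc norm_mult)
  also have "\<dots> \<le> (r ^ k * norm (pochhammer z2 k)) * (r * norm (z2 + of_nat k))"
    by (rule mult_mono) (use Suc assms(1) in auto)
  also have "\<dots> = r ^ Suc k * (norm (pochhammer z2 k) * norm (z2 + of_nat k))" by (simp add: algebra_simps)
  also have "\<dots> = r ^ Suc k * norm (pochhammer z2 (Suc k))" by (simp only: pochhammer_Suc norm_mult)
  finally show ?case .
qed simp

lemma series_term_bound:
  assumes r: "r \<ge> 0" and h: "\<And>i. norm (u + of_nat i) \<le> r * norm (v + of_nat i)"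
    and nz: "pochhammer v n \<noteq> 0"
  shows "norm (pochhammer u n / (pochhammer v n * fact n) * (z::complex) ^ n) \<le> (r * norm z) ^ n / fact n"
proof -
  have "norm (pochhammer u n) \<le> r ^ n * norm (pochhammer v n)" by (rule poch_ratio[OF r h])
  then have "norm (pochhammer u n) / norm (pochhammer v n) \<le> r ^ n"
    using nz by (simp add: divide_le_eq)
  then have "norm (pochhammer u n) / norm (pochhammer v n) * norm z ^ n / fact n \<le> r ^ n * norm z ^ n / fact n"
    by (intro divide_right_mono mult_right_mono) auto
  then show ?thesis by (simp add: norm_mult norm_divide norm_power power_mult_distrib)
qed

lemma summable_expbound: "summable (\<lambda>n. (t::real) ^ n / fact n)"
  using summable_exp[of t] by (simp add: field_simps)

lemma series_summable:
  assumes r: "r \<ge> 0" and h: "\<And>i. norm (u + of_nat i) \<le> r * norm (v + of_nat i)"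
    and nz: "\<And>n. pochhammer v n \<noteq> 0"
  shows "summable (\<lambda>n. norm (pochhammer u n / (pochhammer v n * fact n) * (z::complex) ^ n))"
  by (rule summable_comparison_test[OF _ summable_expbound[of "r * norm z"]])
     (use series_term_bound[OF r h nz] in auto)


lemma pow22: "(2::real) ^ j * 2 ^ j = 4 ^ j"
  by (simp add: power_mult_distrib[symmetric])

lemma Suc_le_pow2: "real (Suc j) \<le> 2 ^ j"
proof -
  have "Suc j \<le> 2 ^ j" using less_exp[of j] by linarith
  then have "real (Suc j) \<le> real (2 ^ j)" by (simp only: of_nat_le_iff)
  then show ?thesis by simp
qed

lemma fact_split_le: "p \<le> j \<Longrightarrow> fact p * fact (j - p) \<le> (fact j :: real)"
proof -
  assume "p \<le> j"
  then have "real (j choose p) = fact j / (fact p * fact (j - p))" by (rule binomial_fact)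
  moreover have C1: "real (j choose p) \<ge> 1" using \<open>p \<le> j\<close> by (simp add: Suc_leI)
  ultimately have e: "fact p * fact (j - p) * real (j choose p) = fact j" by (simp add: field_simps)
  have "fact p * fact (j - p) * 1 \<le> fact p * fact (j - p) * real (j choose p)"
    by (intro mult_left_mono C1) auto
  then show ?thesis using e by simp
qed

context hyp
begin

lemma kap_bound:
  assumes A1: "1 \<le> A" and mu: "0 < \<mu>"
    and Uc': "\<And>n. norm (pochhammer c' n) \<le> A ^ n * fact n"
    and Lc: "\<And>n. \<mu> ^ n * fact n \<le> norm (pochhammer c n)"
    and Lc': "\<And>n. \<mu> ^ n * fact n \<le> norm (pochhammer c' n)"
  shows "norm (kap j q) \<le> (4 * A / \<mu>) ^ j"
proof (cases "q \<le> j")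
  case False
  then show ?thesis using A1 mu by (simp add: kap_def binomial_eq_0)
next
  case True
  have C: "real (j choose q) \<le> 2 ^ j"
  proof -
    have "j choose q \<le> 2 ^ j" by (rule binomial_le_pow2)
    then have "real (j choose q) \<le> real (2 ^ j)" by (simp only: of_nat_le_iff)
    then show ?thesis by simp
  qed
  have F: "fact j = real (j choose q) * (fact q * fact (j - q))"
    using binomial_fact[OF True, where 'a=real] by (simp add: field_simps)
  have d1: "0 < \<mu> ^ q * fact q * (\<mu> ^ (j - q) * fact (j - q))" using mu by simp
  have d2: "\<mu> ^ q * fact q * (\<mu> ^ (j - q) * fact (j - q)) \<le> norm (pochhammer c q) * norm (pochhammer c' (j - q))"
    by (rule mult_mono[OF Lc Lc']) (use mu in auto)
  have "norm (kap j q) = real (j choose q) * norm (pochhammer c' j) / (norm (pochhammer c q) * norm (pochhammer c' (j - q)))"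
    by (simp add: kap_def norm_mult norm_divide norm_power)
  also have "\<dots> \<le> real (j choose q) * (A ^ j * fact j) / (\<mu> ^ q * fact q * (\<mu> ^ (j - q) * fact (j - q)))"
    by (rule frac_le[OF _ _ d1 d2]) (use A1 Uc' in \<open>auto intro: mult_left_mono\<close>)
  also have "\<dots> = real (j choose q) * real (j choose q) * A ^ j / \<mu> ^ j"
  proof -
    have "\<mu> ^ q * \<mu> ^ (j - q) = \<mu> ^ j" using True by (simp add: power_add[symmetric])
    then show ?thesis unfolding F using mu by (simp add: field_simps)
  qed
  also have "\<dots> \<le> 2 ^ j * 2 ^ j * A ^ j / \<mu> ^ j"
    by (intro divide_right_mono mult_right_mono mult_mono C) (use A1 mu in auto)
  also have "\<dots> = ((2 * 2) * A / \<mu>) ^ j" by (simp only: power_mult_distrib power_divide)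
  also have "\<dots> = (4 * A / \<mu>) ^ j" by simp
  finally show ?thesis .
qed

end

lemma Phi_bound:
  assumes B: "\<And>q. norm (f q) \<le> B"
    and Ua: "\<And>n. norm (pochhammer a n) \<le> A ^ n * fact n"
    and Ua': "\<And>n. norm (pochhammer a' n) \<le> A ^ n * fact n"
    and A0: "0 \<le> A"
  shows "norm (Phi a a' j f) \<le> 2 ^ j * B * A ^ j * fact j"
proof -
  have B0: "0 \<le> B" using B[of 0] norm_ge_zero order_trans by blast
  have "norm (Phi a a' j f) \<le> (\<Sum>p\<le>j. norm (f p) * norm (pochhammer a p) * norm (pochhammer a' (j - p)))"
    unfolding Phi_def by (rule order_trans[OF norm_sum]) (simp add: norm_mult)
  also have "\<dots> \<le> (\<Sum>p\<le>j. B * A ^ j * fact j)"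
  proof (rule sum_mono)
    fix p assume p: "p \<in> {..j}"
    have "norm (f p) * norm (pochhammer a p) * norm (pochhammer a' (j - p)) \<le> B * (A ^ p * fact p) * (A ^ (j - p) * fact (j - p))"
      by (intro mult_mono B Ua Ua') (use A0 B0 in auto)
    also have "\<dots> = B * (A ^ p * A ^ (j - p)) * (fact p * fact (j - p))" by (simp add: mult_ac)
    also have "A ^ p * A ^ (j - p) = A ^ j" using p by (simp add: power_add[symmetric])
    also have "B * A ^ j * (fact p * fact (j - p)) \<le> B * A ^ j * fact j"
      by (intro mult_left_mono fact_split_le) (use p A0 B0 in auto)
    finally show "norm (f p) * norm (pochhammer a p) * norm (pochhammer a' (j - p)) \<le> B * A ^ j * fact j" .
  qed
  also have "\<dots> = real (Suc j) * (B * A ^ j * fact j)" by simp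
  also have "\<dots> \<le> 2 ^ j * (B * A ^ j * fact j)"
    by (intro mult_right_mono Suc_le_pow2) (use A0 B0 in auto)
  finally show ?thesis by (simp add: mult_ac)
qed

lemma ev_bound:
  assumes B: "\<And>q. norm (f q) \<le> B" and R: "norm x \<le> R" "norm y \<le> R"
  shows "norm (ev j f x y) \<le> 2 ^ j * B * R ^ j"
proof -
  have B0: "0 \<le> B" using B[of 0] norm_ge_zero order_trans by blast
  have R0: "0 \<le> R" using R(1) norm_ge_zero order_trans by blast
  have "norm (ev j f x y) \<le> (\<Sum>p\<le>j. norm (f p) * norm x ^ p * norm y ^ (j - p))"
    unfolding ev_def by (rule order_trans[OF norm_sum]) (simp add: norm_mult norm_power)
  also have "\<dots> \<le> (\<Sum>p\<le>j. B * R ^ j)"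
  proof (rule sum_mono)
    fix p assume p: "p \<in> {..j}"
    have "norm (f p) * norm x ^ p * norm y ^ (j - p) \<le> B * R ^ p * R ^ (j - p)"
      by (intro mult_mono B power_mono R) (use B0 R0 in auto)
    also have "B * R ^ p * R ^ (j - p) = B * R ^ j" using p by (simp add: mult.assoc power_add[symmetric])
    finally show "norm (f p) * norm x ^ p * norm y ^ (j - p) \<le> B * R ^ j" .
  qed
  also have "\<dots> = real (Suc j) * (B * R ^ j)" by simp
  also have "\<dots> \<le> 2 ^ j * (B * R ^ j)"
    by (intro mult_right_mono Suc_le_pow2) (use R0 B0 in auto)
  finally show ?thesis by (simp add: mult_ac)
qed

context hyp
begin

lemma CD_bound:
  assumes ab: "\<And>n::nat. a + a' \<noteq> - of_nat n"
    and A1: "1 \<le> A" and mu: "0 < \<mu>"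
    and Ua: "\<And>n. norm (pochhammer a n) \<le> A ^ n * fact n"
    and Ua': "\<And>n. norm (pochhammer a' n) \<le> A ^ n * fact n"
    and Uc: "\<And>n. norm (pochhammer c n) \<le> A ^ n * fact n"
    and Uc': "\<And>n. norm (pochhammer c' n) \<le> A ^ n * fact n"
    and Lc: "\<And>n. \<mu> ^ n * fact n \<le> norm (pochhammer c n)"
    and Lc': "\<And>n. \<mu> ^ n * fact n \<le> norm (pochhammer c' n)"
    and Le: "\<mu> ^ j * fact j \<le> norm (pochhammer (c + c' + of_nat j - 1) j)"
    and R: "norm x \<le> R" "norm y \<le> R"
  shows "norm (coeffD a a' c c' j * hom2F1 j (c + c' + of_nat j - 1) c x y)
     \<le> ((2 * (4 * A / \<mu>) * A) * A * (2 * (4 * A / \<mu>) * R) / (\<mu> * \<mu>)) ^ j / fact j"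
proof -
  define Kk where "Kk = 4 * A / \<mu>"
  have Kk0: "0 \<le> Kk" using A1 mu by (simp add: Kk_def)
  have R0: "0 \<le> R" using R(1) norm_ge_zero order_trans by blast
  have kb: "\<And>q. norm (kap j q) \<le> Kk ^ j" unfolding Kk_def by (rule kap_bound[OF A1 mu Uc' Lc Lc'])
  have P: "norm (Phi a a' j (kap j)) \<le> 2 ^ j * Kk ^ j * A ^ j * fact j"
    by (rule Phi_bound[OF kb Ua Ua']) (use A1 in auto)
  have E: "norm (ev j (kap j) x y) \<le> 2 ^ j * Kk ^ j * R ^ j"
    by (rule ev_bound[OF kb R])
  have d1: "0 < fact j * (\<mu> ^ j * fact j) * (\<mu> ^ j * fact j)" using mu by simp
  have d2: "fact j * (\<mu> ^ j * fact j) * (\<mu> ^ j * fact j) \<le> fact j * norm (pochhammer c' j) * norm (pochhammer (c + c' + of_nat j - 1) j)"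
    by (intro mult_mono Lc' Le order_refl) (use mu in auto)
  have "norm (coeffD a a' c c' j * hom2F1 j (c + c' + of_nat j - 1) c x y)
      = norm (Phi a a' j (kap j)) * norm (pochhammer c j) / (fact j * norm (pochhammer c' j) * norm (pochhammer (c + c' + of_nat j - 1) j)) * norm (ev j (kap j) x y)"
    unfolding coeffD_Phi[OF ab] ev_kap[symmetric] by (simp add: norm_mult norm_divide)
  also have "\<dots> \<le> (2 ^ j * Kk ^ j * A ^ j * fact j) * (A ^ j * fact j) / (fact j * (\<mu> ^ j * fact j) * (\<mu> ^ j * fact j)) * (2 ^ j * Kk ^ j * R ^ j)"
    by (intro mult_mono frac_le[OF _ _ d1 d2] P Uc E) (use A1 Kk0 R0 mu in \<open>auto intro!: divide_nonneg_pos\<close>)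
  also have "\<dots> = ((2 * Kk * A) * A * (2 * Kk * R) / (\<mu> * \<mu>)) ^ j / fact j"
    using mu by (simp add: power_mult_distrib power_divide field_simps pow22)
  finally show ?thesis unfolding Kk_def .
qed

end

theorem corollary2p7:
  fixes a a' c c' x y :: complex
  assumes "\<And>n::nat. c \<noteq> - of_nat n"
    and "\<And>n::nat. c' \<noteq> - of_nat n"
    and "\<And>n::nat. c + c' \<noteq> - of_nat n"
    and "\<And>n::nat. a + a' \<noteq> - of_nat n"
  shows "(\<lambda>j. coeffD a a' c c' j * hom2F1 j (c + c' + of_nat j - 1) c x y
              * hyp1F1 (a + a' + of_nat j) (c + c' + 2 * of_nat j) (x + y))
         sums (hyp1F1 a c x * hyp1F1 a' c' y)"
proof -
  interpret H: hyp c c' using assms(1-3) by unfold_locales auto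
  obtain \<mu>1 where m1: "\<mu>1 > 0" "\<mu>1 \<le> 1" "\<forall>n. \<mu>1 * (of_nat n + 1) \<le> norm (c + of_nat n)"
    using good_lower[OF assms(1)] by blast
  obtain \<mu>2 where m2: "\<mu>2 > 0" "\<mu>2 \<le> 1" "\<forall>n. \<mu>2 * (of_nat n + 1) \<le> norm (c' + of_nat n)"
    using good_lower[OF assms(2)] by blast
  obtain \<mu>3 where m3: "\<mu>3 > 0" "\<mu>3 \<le> 1" "\<forall>n. \<mu>3 * (of_nat n + 1) \<le> norm (c + c' + of_nat n)"
    using good_lower[OF assms(3)] by blast
  define \<mu> where "\<mu> = min \<mu>1 (min \<mu>2 \<mu>3)"
  have mu: "0 < \<mu>" "\<mu> \<le> 1" using m1 m2 m3 by (auto simp: \<mu>_def)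
  have mono_mu: "\<mu> * (of_nat n + 1) \<le> \<nu> * (of_nat n + 1)" if "\<mu> \<le> \<nu>" for \<nu> n
    using that by (intro mult_right_mono) auto
  have le: "\<mu> \<le> \<mu>1" "\<mu> \<le> \<mu>2" "\<mu> \<le> \<mu>3" by (auto simp: \<mu>_def)
  have Lzc: "\<mu> * (of_nat n + 1) \<le> norm (c + of_nat n)" for n
    using order_trans[OF mono_mu[OF le(1)] m1(3)[rule_format]] .
  have Lzc': "\<mu> * (of_nat n + 1) \<le> norm (c' + of_nat n)" for n
    using order_trans[OF mono_mu[OF le(2)] m2(3)[rule_format]] .
  have Lzcc: "\<mu> * (of_nat n + 1) \<le> norm (c + c' + of_nat n)" for n
    using order_trans[OF mono_mu[OF le(3)] m3(3)[rule_format]] .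
  define A where "A = norm a + norm a' + norm c + norm c' + 1"
  have A1: "1 \<le> A" by (simp add: A_def)
  have Ua: "\<And>n. norm (pochhammer a n) \<le> A ^ n * fact n" by (rule poch_upper') (simp add: A_def)
  have Ua': "\<And>n. norm (pochhammer a' n) \<le> A ^ n * fact n" by (rule poch_upper') (simp add: A_def)
  have Uc: "\<And>n. norm (pochhammer c n) \<le> A ^ n * fact n" by (rule poch_upper') (simp add: A_def)
  have Uc': "\<And>n. norm (pochhammer c' n) \<le> A ^ n * fact n" by (rule poch_upper') (simp add: A_def)
  have naa: "norm (a + a') + 1 \<le> A"
    using norm_triangle_ineq[of a a'] norm_ge_zero[of c] norm_ge_zero[of c'] unfolding A_def by linarith
  have Lc: "\<And>n. \<mu> ^ n * fact n \<le> norm (pochhammer c n)"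
    by (rule poch_lower0[OF _ Lzc]) (use mu in auto)
  have Lc': "\<And>n. \<mu> ^ n * fact n \<le> norm (pochhammer c' n)"
    by (rule poch_lower0[OF _ Lzc']) (use mu in auto)
  have Le: "\<mu> ^ j * fact j \<le> norm (pochhammer (c + c' + of_nat j - 1) j)" for j
  proof (cases j)
    case (Suc d)
    have e: "c + c' + of_nat j - 1 = c + c' + of_nat d" using Suc by simp
    show ?thesis unfolding e by (rule poch_lower[OF _ Lzcc]) (use mu in auto)
  qed simp
  define R where "R = norm x + norm y"
  have R: "norm x \<le> R" "norm y \<le> R" by (auto simp: R_def)
  define L where "L = (2 * (4 * A / \<mu>) * A) * A * (2 * (4 * A / \<mu>) * R) / (\<mu> * \<mu>)"
  have L0: "0 \<le> L" using A1 mu by (simp add: L_def R_def)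
  define s where "s = x + y"
  define Q where "Q = A / \<mu> * norm s"
  have Q0: "0 \<le> Q" using A1 mu by (simp add: Q_def)
  define E where "E j k = pochhammer (a + a' + of_nat j) k / (pochhammer (c + c' + 2 * of_nat j) k * fact k) * s ^ k" for j k
  define CD where "CD j = coeffD a a' c c' j * hom2F1 j (c + c' + of_nat j - 1) c x y" for j
  define T where "T = (\<lambda>(j, k). CD j * E j k)"
  have r0: "0 \<le> A / \<mu>" using A1 mu by simp
  have rowh: "norm (a + a' + of_nat j + of_nat i) \<le> A / \<mu> * norm (c + c' + 2 * of_nat j + of_nat i)" for j i
  proof -
    have "norm (a + a' + of_nat j + of_nat i) = norm ((a + a') + of_nat (j + i))" by (simp add: add.assoc)
    also have "\<dots> \<le> norm (a + a') + norm (of_nat (j + i) :: complex)" by (rule norm_triangle_ineq)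
    also have "\<dots> = norm (a + a') + real (j + i)" by (simp only: norm_of_nat)
    also have "\<dots> \<le> A * (real (j + i) + 1)"
    proof -
      have "real (j + i) \<le> A * real (j + i)" using A1 by (simp add: mult_le_cancel_right1)
      moreover have "A * (real (j + i) + 1) = A * real (j + i) + A" by (simp add: algebra_simps)
      ultimately show ?thesis using naa by linarith
    qed
    also have "\<dots> \<le> A * (real (2 * j + i) + 1)" using A1 by (intro mult_left_mono) auto
    also have "\<dots> = A / \<mu> * (\<mu> * (real (2 * j + i) + 1))" using mu by simp
    also have "\<dots> \<le> A / \<mu> * norm (c + c' + of_nat (2 * j + i))"
      by (intro mult_left_mono Lzcc r0)
    also have "c + c' + of_nat (2 * j + i) = c + c' + 2 * of_nat j + of_nat i" by simp
    finally show ?thesis .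
  qed
  have rownz: "pochhammer (c + c' + 2 * of_nat j) n \<noteq> 0" for j n
  proof -
    have e: "c + c' + 2 * of_nat j = c + c' + of_nat (2 * j)" by simp
    show ?thesis unfolding e by (rule H.poch_cc_nz)
  qed
  have Ebound: "norm (E j k) \<le> Q ^ k / fact k" for j k
    unfolding E_def Q_def by (rule series_term_bound[OF r0 rowh rownz])
  have CDbound: "norm (CD j) \<le> L ^ j / fact j" for j
    unfolding CD_def L_def by (rule H.CD_bound[OF assms(4) A1 mu(1) Ua Ua' Uc Uc' Lc Lc' Le R])
  define g where "g = (\<lambda>(j, k). L ^ j / fact j * (Q ^ k / fact k))"
  have Tbound: "norm (T p) \<le> g p" for p
  proof (cases p)
    case (Pair j k)
    have "norm (CD j * E j k) = norm (CD j) * norm (E j k)" by (rule norm_mult)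
    also have "\<dots> \<le> (L ^ j / fact j) * (Q ^ k / fact k)"
      by (rule mult_mono[OF CDbound Ebound]) (use L0 in auto)
    finally show ?thesis unfolding Pair T_def g_def by simp
  qed
  have hQ: "((\<lambda>k. Q ^ k / fact k) has_sum (\<Sum>k. Q ^ k / fact k)) UNIV"
    by (rule sums_nonneg_imp_has_sum[OF summable_sums[OF summable_expbound]]) (use Q0 in auto)
  have hL: "((\<lambda>j. L ^ j / fact j) has_sum (\<Sum>j. L ^ j / fact j)) UNIV"
    by (rule sums_nonneg_imp_has_sum[OF summable_sums[OF summable_expbound]]) (use L0 in auto)
  have gsum: "g summable_on UNIV"
  proof -
    have "g summable_on Sigma UNIV (\<lambda>_. UNIV)"
    proof (rule summable_on_SigmaI)
      show "((\<lambda>k. g (j, k)) has_sum (L ^ j / fact j * (\<Sum>k. Q ^ k / fact k))) UNIV" for j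
        unfolding g_def case_prod_conv by (rule has_sum_cmult_right[OF hQ])
      show "(\<lambda>j. L ^ j / fact j * (\<Sum>k. Q ^ k / fact k)) summable_on UNIV"
        using has_sum_cmult_left[OF hL] by (auto simp: summable_on_def)
      show "0 \<le> g (j, k)" for j k unfolding g_def using L0 Q0 by simp
    qed
    then show ?thesis by simp
  qed
  have Tabs: "(\<lambda>x. norm (T x)) summable_on UNIV"
    by (rule Infinite_Sum.abs_summable_on_comparison_test'[OF gsum], rule Tbound)
  have Tsum: "T summable_on UNIV" by (rule Infinite_Sum.abs_summable_summable[OF Tabs])
  define S where "S = infsum T UNIV"
  have hasS: "(T has_sum S) UNIV" unfolding S_def using Tsum by (rule has_sum_infsum)
  have rows: "((\<lambda>k. T (j, k)) has_sum (CD j * hyp1F1 (a + a' + of_nat j) (c + c' + 2 * of_nat j) (x + y))) UNIV" for j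
  proof -
    have ns: "summable (\<lambda>k. norm (E j k))"
      unfolding E_def by (rule series_summable[OF r0 rowh rownz])
    have "E j sums hyp1F1 (a + a' + of_nat j) (c + c' + 2 * of_nat j) (x + y)"
      unfolding hyp1F1_def E_def s_def using summable_sums[OF summable_norm_cancel[OF ns[unfolded E_def s_def]]] .
    then have "(E j has_sum hyp1F1 (a + a' + of_nat j) (c + c' + 2 * of_nat j) (x + y)) UNIV"
      by (rule norm_summable_imp_has_sum[OF ns])
    from has_sum_cmult_right[OF this, of "CD j"] show ?thesis by (simp add: T_def)
  qed
  have hasS': "(T has_sum S) (Sigma UNIV (\<lambda>_. UNIV))" using hasS by simp
  have rowsum: "((\<lambda>j. CD j * hyp1F1 (a + a' + of_nat j) (c + c' + 2 * of_nat j) (x + y)) has_sum S) UNIV"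
    by (rule has_sum_Sigma'[OF hasS' rows])
  have diag: "((\<lambda>(N, j). T (j, N - j)) has_sum S) (Sigma UNIV (\<lambda>N. {..N}))"
  proof -
    have "(T has_sum S) UNIV = ((\<lambda>(N, j). T (j, N - j)) has_sum S) (Sigma UNIV (\<lambda>N. {..N}))"
      by (rule has_sum_reindex_bij_witness[where j = "\<lambda>(j, k). (j + k, j)" and i = "\<lambda>(N, j). (j, N - j)"])
         auto
    then show ?thesis using hasS by simp
  qed
  have diagsum: "((\<lambda>N. \<Sum>j\<le>N. T (j, N - j)) has_sum S) UNIV"
    by (rule has_sum_Sigma'[OF diag]) auto
  have cp: "(\<lambda>N. \<Sum>i\<le>N. (pochhammer a i / (pochhammer c i * fact i) * x ^ i) *
                 (pochhammer a' (N - i) / (pochhammer c' (N - i) * fact (N - i)) * y ^ (N - i)))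
        sums (hyp1F1 a c x * hyp1F1 a' c' y)"
    unfolding hyp1F1_def
  proof (rule Cauchy_product_sums)
    show "summable (\<lambda>k. norm (pochhammer a k / (pochhammer c k * fact k) * x ^ k))"
    proof (rule series_summable[OF r0 _ H.poch_c_nz])
      fix i
      have "norm (a + of_nat i) \<le> norm a + real i" using norm_triangle_ineq[of a "of_nat i"] by simp
      also have "\<dots> \<le> A * (real i + 1)"
      proof -
        have "real i \<le> A * real i" using A1 by (simp add: mult_le_cancel_right1)
        moreover have "A * (real i + 1) = A * real i + A" by (simp add: algebra_simps)
        moreover have "norm a + 1 \<le> A" unfolding A_def using norm_ge_zero[of a] norm_ge_zero[of a'] norm_ge_zero[of c] norm_ge_zero[of c'] by linarith
        ultimately show ?thesis by linarith
      qed
      also have "\<dots> = A / \<mu> * (\<mu> * (real i + 1))" using mu by simp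
      also have "\<dots> \<le> A / \<mu> * norm (c + of_nat i)" by (intro mult_left_mono Lzc r0)
      finally show "norm (a + of_nat i) \<le> A / \<mu> * norm (c + of_nat i)" .
    qed
    show "summable (\<lambda>k. norm (pochhammer a' k / (pochhammer c' k * fact k) * y ^ k))"
    proof (rule series_summable[OF r0 _ H.poch_c'_nz])
      fix i
      have "norm (a' + of_nat i) \<le> norm a' + real i" using norm_triangle_ineq[of a' "of_nat i"] by simp
      also have "\<dots> \<le> A * (real i + 1)"
      proof -
        have "real i \<le> A * real i" using A1 by (simp add: mult_le_cancel_right1)
        moreover have "A * (real i + 1) = A * real i + A" by (simp add: algebra_simps)
        moreover have "norm a' + 1 \<le> A" unfolding A_def using norm_ge_zero[of a] norm_ge_zero[of a'] norm_ge_zero[of c] norm_ge_zero[of c'] by linarith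
        ultimately show ?thesis by linarith
      qed
      also have "\<dots> = A / \<mu> * (\<mu> * (real i + 1))" using mu by simp
      also have "\<dots> \<le> A / \<mu> * norm (c' + of_nat i)" by (intro mult_left_mono Lzc' r0)
      finally show "norm (a' + of_nat i) \<le> A / \<mu> * norm (c' + of_nat i)" .
    qed
  qed
  have eqN: "(\<Sum>i\<le>N. (pochhammer a i / (pochhammer c i * fact i) * x ^ i) *
                 (pochhammer a' (N - i) / (pochhammer c' (N - i) * fact (N - i)) * y ^ (N - i)))
        = (\<Sum>j\<le>N. T (j, N - j))" for N
    unfolding H.degN[OF assms(4)] T_def CD_def E_def s_def by simp
  have "(\<lambda>N. \<Sum>j\<le>N. T (j, N - j)) sums S" by (rule has_sum_imp_sums[OF diagsum])
  then have "S = hyp1F1 a c x * hyp1F1 a' c' y" using cp unfolding eqN by (rule sums_unique2)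
  then show ?thesis using has_sum_imp_sums[OF rowsum] by (simp add: CD_def)
qed

end
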